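(* Let $\star$ be a $t$-definer. For every $r>0$ there exists $r_1>0$ such that $a\star b<r$ for all $a,b\in[0,r_1)$, i.e. $[0,r_1)\star[0,r_1)\subseteq[0,r)$.
   Context: A $t$-definer is a function $\star:[0,\infty)\times[0,\infty)\to[0,\infty)$ such that for all $a,b,c\ge 0$: $a\star b=b\star a$; $a\star(b\star c)=(a\star b)\star c$; if $a\le b$ then $a\star c\le b\star c$; $a\star 0=a$; and $\star$ is continuous in its first variable with respect to the Euclidean topology. *)

theory Defs
  imports "HOL-Analysis.Analysis"
begin

text \<open>A t-definer: an operation on [0,oo) (modelled as a real function whose
  behaviour outside [0,oo) is irrelevant).\<close>
definition t_definer :: "(real \<Rightarrow> real \<Rightarrow> real) \<Rightarrow> bool" where
  "t_definer f \<longleftrightarrow>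
     (\<forall>a\<ge>0. \<forall>b\<ge>0. f a b \<ge> 0) \<and>
     (\<forall>a\<ge>0. \<forall>b\<ge>0. f a b = f b a) \<and>
     (\<forall>a\<ge>0. \<forall>b\<ge>0. \<forall>c\<ge>0. f a (f b c) = f (f a b) c) \<and>
     (\<forall>a\<ge>0. \<forall>b\<ge>0. \<forall>c\<ge>0. a \<le> b \<longrightarrow> f a c \<le> f b c) \<and>
     (\<forall>a\<ge>0. f a 0 = a) \<and>
     (\<forall>c\<ge>0. continuous_on {0..} (\<lambda>a. f a c))"

end

theory Submission
  imports Defs
begin

theorem lemma2p3:
  fixes f :: "real \<Rightarrow> real \<Rightarrow> real"
  assumes "t_definer f"
    and "r > 0"
  shows "\<exists>r1>0. \<forall>a b. 0 \<le> a \<and> a < r1 \<and> 0 \<le> b \<and> b < r1 \<longrightarrow> f a b < r"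
proof -
  note D = assms(1)[unfolded t_definer_def]
  have c: "continuous_on {0..} (\<lambda>a. f a (r/2))" using D assms(2) by simp
  have "f 0 (r/2) = r/2" using D assms(2) by (metis less_eq_real_def half_gt_zero order_refl)
  obtain d where d: "d > 0" "\<forall>x'\<in>{0..}. dist x' 0 < d \<longrightarrow> dist (f x' (r/2)) (f 0 (r/2)) < r/2"
    using c[unfolded continuous_on_iff] assms(2) by (metis atLeast_iff half_gt_zero order_refl)
  show ?thesis
  proof (intro exI[of _ "min d (r/2)"] conjI allI impI)
    show "min d (r/2) > 0" using d assms(2) by simp
    fix a b assume h: "0 \<le> a \<and> a < min d (r / 2) \<and> 0 \<le> b \<and> b < min d (r / 2)"
    have "f b a \<le> f (r/2) a" using D h by auto
    hence "f a b \<le> f a (r/2)" using D h assms(2) by (metis less_eq_real_def half_gt_zero)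
    moreover have "dist (f a (r/2)) (f 0 (r/2)) < r/2" using d h by (simp add: dist_real_def)
    ultimately show "f a b < r" using \<open>f 0 (r/2) = r/2\<close> by (simp add: dist_real_def abs_if split: if_splits)
  qed
qed

end
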